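(* Let $m,n\ge1$, $1\le r\le mn$, $\mathcal{B}=\mathcal{B}(m,n;r)$ with symmetry group $G$, and fix a division of the grid cells into labelled regions such that every element of $G$ maps each region onto a region (board partitions being taken with respect to it). Suppose $\overline{\mathcal{B}}\subseteq\mathcal{B}$ satisfies: (1) $\overline{\mathcal{B}}$ is a disjoint union of sets $\pi_1,\dots,\pi_t$, each $\pi_i$ being the set of all boards in $\mathcal{B}$ with some fixed board partition; (2) every board of $\mathcal{B}$ is equivalent under $G$ to some board of $\overline{\mathcal{B}}$; (3) any two boards of $\overline{\mathcal{B}}$ that are equivalent under $G$ have the same board partition. Let $K_i=\{g\in G:g\cdot\pi_i=\pi_i\}$. Fix a tiling problem, and for each $i$ let $S_i\subseteq\pi_i$ be the set of boards in $\pi_i$ for which this tiling problem is solvable. Then the total number of boards in $\mathcal{B}(m,n;r)$ for which the tiling problem is solvable is \[\sum_{i=1}^t|S_i|\cdot[G:K_i].\]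
   Context: A grid has $m$ rows and $n$ columns of unit square cells; $\mathcal{B}(m,n;r)$ is the set of all boards, i.e. choices of exactly $r$ blocked cells. Symmetries of the rectangle act on boards; the symmetry group $G$ is $D_4$ (all 8 rotations and reflections of the square) if $m=n>1$, $\langle H,V\rangle=\{R_0,H,V,R_{180}\}$ (identity, reflections across the horizontal and vertical midlines, 180-degree rotation) if $m\neq n$ and $m,n>1$, and $\langle R_{180}\rangle$ if exactly one of $m,n$ is 1. Boards $B,B'$ are equivalent under $G$ if $g\cdot B=B'$ for some $g\in G$. Given a division of the grid into labelled regions, the board partition of a board is the tuple of numbers of blocked cells in each region. A polyomino is a shape made of finitely many edge-connected unit squares; a free polyomino may be rotated and reflected. A tiling problem consists of a prescribed list of free polyominoes whose total number of squares is $mn-r$; a board is solvable for it if the unblocked cells can be exactly covered, without gaps or overlaps, by placing each listed polyomino (in any rotation/reflection) once. *)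

theory Defs
  imports Main
begin

type_synonym cell = "nat \<times> nat"
type_synonym board = "cell set"

definition grid :: "nat \<Rightarrow> nat \<Rightarrow> cell set" where
  "grid m n = {(i,j). i < m \<and> j < n}"

definition boards :: "nat \<Rightarrow> nat \<Rightarrow> nat \<Rightarrow> board set" where
  "boards m n r = {B. B \<subseteq> grid m n \<and> card B = r}"

definition grid_map :: "nat \<Rightarrow> nat \<Rightarrow> (cell \<Rightarrow> cell) \<Rightarrow> cell \<Rightarrow> cell" where
  "grid_map m n f c = (if c \<in> grid m n then f c else c)"

definition symH :: "nat \<Rightarrow> nat \<Rightarrow> cell \<Rightarrow> cell" where
  "symH m n = grid_map m n (\<lambda>(i,j). (m - 1 - i, j))"
definition symV :: "nat \<Rightarrow> nat \<Rightarrow> cell \<Rightarrow> cell" where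
  "symV m n = grid_map m n (\<lambda>(i,j). (i, n - 1 - j))"
definition symR180 :: "nat \<Rightarrow> nat \<Rightarrow> cell \<Rightarrow> cell" where
  "symR180 m n = grid_map m n (\<lambda>(i,j). (m - 1 - i, n - 1 - j))"
definition symT :: "nat \<Rightarrow> nat \<Rightarrow> cell \<Rightarrow> cell" where
  "symT m n = grid_map m n (\<lambda>(i,j). (j, i))"
definition symAT :: "nat \<Rightarrow> nat \<Rightarrow> cell \<Rightarrow> cell" where
  "symAT m n = grid_map m n (\<lambda>(i,j). (n - 1 - j, m - 1 - i))"
definition symR90 :: "nat \<Rightarrow> nat \<Rightarrow> cell \<Rightarrow> cell" where
  "symR90 m n = grid_map m n (\<lambda>(i,j). (j, m - 1 - i))"
definition symR270 :: "nat \<Rightarrow> nat \<Rightarrow> cell \<Rightarrow> cell" where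
  "symR270 m n = grid_map m n (\<lambda>(i,j). (n - 1 - j, i))"

text \<open>The symmetry group G, as a set of permutations of the cells.
  (For m = n = 1 the group <R180> is used, which is trivial.)\<close>
definition symgroup :: "nat \<Rightarrow> nat \<Rightarrow> (cell \<Rightarrow> cell) set" where
  "symgroup m n =
    (if m = n \<and> m > 1 then
       {id, symH m n, symV m n, symR180 m n, symT m n, symAT m n, symR90 m n, symR270 m n}
     else if m > 1 \<and> n > 1 then {id, symH m n, symV m n, symR180 m n}
     else {id, symR180 m n})"

definition act :: "(cell \<Rightarrow> cell) \<Rightarrow> board \<Rightarrow> board" where
  "act g B = g ` B"

definition equivalent :: "nat \<Rightarrow> nat \<Rightarrow> board \<Rightarrow> board \<Rightarrow> bool" where
  "equivalent m n B B' \<longleftrightarrow> (\<exists>g \<in> symgroup m n. act g B = B')"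

definition region :: "nat \<Rightarrow> nat \<Rightarrow> (cell \<Rightarrow> 'l) \<Rightarrow> 'l \<Rightarrow> cell set" where
  "region m n reg l = {c \<in> grid m n. reg c = l}"

definition board_partition :: "(cell \<Rightarrow> 'l) \<Rightarrow> board \<Rightarrow> 'l \<Rightarrow> nat" where
  "board_partition reg B = (\<lambda>l. card {c \<in> B. reg c = l})"

definition regions_respected :: "nat \<Rightarrow> nat \<Rightarrow> (cell \<Rightarrow> 'l) \<Rightarrow> bool" where
  "regions_respected m n reg \<longleftrightarrow>
     (\<forall>g \<in> symgroup m n. \<forall>l. \<exists>l'. g ` region m n reg l = region m n reg l')"

type_synonym icell = "int \<times> int"

definition adjacent :: "icell \<Rightarrow> icell \<Rightarrow> bool" where
  "adjacent p q \<longleftrightarrow> \<bar>fst p - fst q\<bar> + \<bar>snd p - snd q\<bar> = 1"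

definition polyomino :: "icell set \<Rightarrow> bool" where
  "polyomino P \<longleftrightarrow> finite P \<and> P \<noteq> {} \<and>
     (\<forall>p \<in> P. \<forall>q \<in> P. (\<lambda>x y. x \<in> P \<and> y \<in> P \<and> adjacent x y)\<^sup>*\<^sup>* p q)"

definition plane_isos :: "(icell \<Rightarrow> icell) set" where
  "plane_isos = {\<lambda>(x,y). (x,y), \<lambda>(x,y). (-y,x), \<lambda>(x,y). (-x,-y), \<lambda>(x,y). (y,-x),
                 \<lambda>(x,y). (-x,y), \<lambda>(x,y). (x,-y), \<lambda>(x,y). (y,x), \<lambda>(x,y). (-y,-x)}"

definition placement_of :: "icell set \<Rightarrow> icell set \<Rightarrow> bool" where
  "placement_of P Q \<longleftrightarrow>
     (\<exists>T \<in> plane_isos. \<exists>a b. Q = (\<lambda>p. (fst (T p) + a, snd (T p) + b)) ` P)"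

definition tiling_problem :: "nat \<Rightarrow> nat \<Rightarrow> nat \<Rightarrow> icell set list \<Rightarrow> bool" where
  "tiling_problem m n r ps \<longleftrightarrow>
     (\<forall>P \<in> set ps. polyomino P) \<and> (\<Sum>P\<leftarrow>ps. card P) = m * n - r"

definition to_icell :: "cell \<Rightarrow> icell" where
  "to_icell c = (int (fst c), int (snd c))"

definition solvable :: "nat \<Rightarrow> nat \<Rightarrow> icell set list \<Rightarrow> board \<Rightarrow> bool" where
  "solvable m n ps B \<longleftrightarrow>
     (\<exists>Qs. length Qs = length ps \<and>
        (\<forall>k < length ps. placement_of (ps ! k) (Qs ! k)) \<and>
        (\<forall>k < length ps. \<forall>k' < length ps. k \<noteq> k' \<longrightarrow> Qs ! k \<inter> Qs ! k' = {}) \<and>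
        \<Union> (set Qs) = to_icell ` (grid m n - B))"

end

theory Submission
  imports Defs
begin
lemmas D = symH_def symV_def symR180_def symT_def symAT_def symR90_def symR270_def grid_map_def grid_def
lemma [simp]: "symH m n \<circ> symH m n = id" by (rule ext) (auto simp: D)
lemma [simp]: "symH m n \<circ> symV m n = symR180 m n" by (rule ext) (auto simp: D)
lemma [simp]: "symH m n \<circ> symR180 m n = symV m n" by (rule ext) (auto simp: D)
lemma [simp]: "symH m m \<circ> symT m m = symR270 m m" by (rule ext) (auto simp: D)
lemma [simp]: "symH m m \<circ> symAT m m = symR90 m m" by (rule ext) (auto simp: D)
lemma [simp]: "symH m m \<circ> symR90 m m = symAT m m" by (rule ext) (auto simp: D)
lemma [simp]: "symH m m \<circ> symR270 m m = symT m m" by (rule ext) (auto simp: D)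
lemma [simp]: "symV m n \<circ> symH m n = symR180 m n" by (rule ext) (auto simp: D)
lemma [simp]: "symV m n \<circ> symV m n = id" by (rule ext) (auto simp: D)
lemma [simp]: "symV m n \<circ> symR180 m n = symH m n" by (rule ext) (auto simp: D)
lemma [simp]: "symV m m \<circ> symT m m = symR90 m m" by (rule ext) (auto simp: D)
lemma [simp]: "symV m m \<circ> symAT m m = symR270 m m" by (rule ext) (auto simp: D)
lemma [simp]: "symV m m \<circ> symR90 m m = symT m m" by (rule ext) (auto simp: D)
lemma [simp]: "symV m m \<circ> symR270 m m = symAT m m" by (rule ext) (auto simp: D)
lemma [simp]: "symR180 m n \<circ> symH m n = symV m n" by (rule ext) (auto simp: D)
lemma [simp]: "symR180 m n \<circ> symV m n = symH m n" by (rule ext) (auto simp: D)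
lemma [simp]: "symR180 m n \<circ> symR180 m n = id" by (rule ext) (auto simp: D)
lemma [simp]: "symR180 m m \<circ> symT m m = symAT m m" by (rule ext) (auto simp: D)
lemma [simp]: "symR180 m m \<circ> symAT m m = symT m m" by (rule ext) (auto simp: D)
lemma [simp]: "symR180 m m \<circ> symR90 m m = symR270 m m" by (rule ext) (auto simp: D)
lemma [simp]: "symR180 m m \<circ> symR270 m m = symR90 m m" by (rule ext) (auto simp: D)
lemma [simp]: "symT m m \<circ> symH m m = symR90 m m" by (rule ext) (auto simp: D)
lemma [simp]: "symT m m \<circ> symV m m = symR270 m m" by (rule ext) (auto simp: D)
lemma [simp]: "symT m m \<circ> symR180 m m = symAT m m" by (rule ext) (auto simp: D)
lemma [simp]: "symT m m \<circ> symT m m = id" by (rule ext) (auto simp: D)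
lemma [simp]: "symT m m \<circ> symAT m m = symR180 m m" by (rule ext) (auto simp: D)
lemma [simp]: "symT m m \<circ> symR90 m m = symH m m" by (rule ext) (auto simp: D)
lemma [simp]: "symT m m \<circ> symR270 m m = symV m m" by (rule ext) (auto simp: D)
lemma [simp]: "symAT m m \<circ> symH m m = symR270 m m" by (rule ext) (auto simp: D)
lemma [simp]: "symAT m m \<circ> symV m m = symR90 m m" by (rule ext) (auto simp: D)
lemma [simp]: "symAT m m \<circ> symR180 m m = symT m m" by (rule ext) (auto simp: D)
lemma [simp]: "symAT m m \<circ> symT m m = symR180 m m" by (rule ext) (auto simp: D)
lemma [simp]: "symAT m m \<circ> symAT m m = id" by (rule ext) (auto simp: D)
lemma [simp]: "symAT m m \<circ> symR90 m m = symV m m" by (rule ext) (auto simp: D)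
lemma [simp]: "symAT m m \<circ> symR270 m m = symH m m" by (rule ext) (auto simp: D)
lemma [simp]: "symR90 m m \<circ> symH m m = symT m m" by (rule ext) (auto simp: D)
lemma [simp]: "symR90 m m \<circ> symV m m = symAT m m" by (rule ext) (auto simp: D)
lemma [simp]: "symR90 m m \<circ> symR180 m m = symR270 m m" by (rule ext) (auto simp: D)
lemma [simp]: "symR90 m m \<circ> symT m m = symV m m" by (rule ext) (auto simp: D)
lemma [simp]: "symR90 m m \<circ> symAT m m = symH m m" by (rule ext) (auto simp: D)
lemma [simp]: "symR90 m m \<circ> symR90 m m = symR180 m m" by (rule ext) (auto simp: D)
lemma [simp]: "symR90 m m \<circ> symR270 m m = id" by (rule ext) (auto simp: D)
lemma [simp]: "symR270 m m \<circ> symH m m = symAT m m" by (rule ext) (auto simp: D)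
lemma [simp]: "symR270 m m \<circ> symV m m = symT m m" by (rule ext) (auto simp: D)
lemma [simp]: "symR270 m m \<circ> symR180 m m = symR90 m m" by (rule ext) (auto simp: D)
lemma [simp]: "symR270 m m \<circ> symT m m = symH m m" by (rule ext) (auto simp: D)
lemma [simp]: "symR270 m m \<circ> symAT m m = symV m m" by (rule ext) (auto simp: D)
lemma [simp]: "symR270 m m \<circ> symR90 m m = id" by (rule ext) (auto simp: D)
lemma [simp]: "symR270 m m \<circ> symR270 m m = symR180 m m" by (rule ext) (auto simp: D)

lemma G_closed: "g \<in> symgroup m n \<Longrightarrow> h \<in> symgroup m n \<Longrightarrow> g \<circ> h \<in> symgroup m n"
  unfolding symgroup_def by (auto split: if_splits)

lemma G_id: "id \<in> symgroup m n"
  unfolding symgroup_def by auto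

lemma G_finite: "finite (symgroup m n)"
  unfolding symgroup_def by auto

lemma G_four: "g \<in> symgroup m n \<Longrightarrow> ((g \<circ> g) \<circ> g) \<circ> g = id"
  unfolding symgroup_def by (auto split: if_splits)

lemma G_inv: assumes "g \<in> symgroup m n" shows "\<exists>h \<in> symgroup m n. h \<circ> g = id \<and> g \<circ> h = id"
proof -
  have "(g \<circ> g) \<circ> g \<in> symgroup m n" using assms G_closed by blast
  moreover have "((g \<circ> g) \<circ> g) \<circ> g = id" using G_four[OF assms] .
  moreover have "g \<circ> ((g \<circ> g) \<circ> g) = id" using G_four[OF assms] by (simp add: comp_assoc)
  ultimately show ?thesis by blast
qed

lemma G_grid: "g \<in> symgroup m n \<Longrightarrow> c \<in> grid m n \<Longrightarrow> g c \<in> grid m n"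
  unfolding symgroup_def by (auto simp: D split: if_splits)

definition aff :: "(icell \<Rightarrow> icell) \<Rightarrow> int \<Rightarrow> int \<Rightarrow> icell \<Rightarrow> icell" where
  "aff T a b p = (fst (T p) + a, snd (T p) + b)"

lemma pi_comp: "T \<in> plane_isos \<Longrightarrow> T' \<in> plane_isos \<Longrightarrow> \<exists>T''\<in>plane_isos. \<forall>x y. T (T' (x,y)) = T'' (x,y)"
  unfolding plane_isos_def apply (simp only: bex_simps insert_iff Set.bex_empty Set.ball_empty ex_simps)
  apply (elim disjE)
  apply (simp_all add: fun_eq_iff)
  done

lemma pi_lin: "T \<in> plane_isos \<Longrightarrow> T (x1+x2, y1+y2) = (fst (T (x1,y1)) + fst (T (x2,y2)), snd (T (x1,y1)) + snd (T (x2,y2)))"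
  unfolding plane_isos_def by auto

lemma pi_inj: "T \<in> plane_isos \<Longrightarrow> inj T"
  unfolding plane_isos_def by (auto simp: inj_def)

lemma aff_inj: "T \<in> plane_isos \<Longrightarrow> inj (aff T a b)"
proof (rule injI)
  fix p q assume T: "T \<in> plane_isos" and "aff T a b p = aff T a b q"
  then have "fst (T p) = fst (T q)" "snd (T p) = snd (T q)" by (auto simp: aff_def)
  then have "T p = T q" by (simp add: prod_eq_iff)
  then show "p = q" using pi_inj[OF T] by (simp add: inj_eq)
qed

lemma aff_comp: assumes "T \<in> plane_isos" "T' \<in> plane_isos"
  shows "\<exists>T''\<in>plane_isos. \<exists>a'' b''. aff T a b \<circ> aff T' a' b' = aff T'' a'' b''"
proof -
  obtain T'' where T'': "T'' \<in> plane_isos" "\<forall>x y. T (T' (x,y)) = T'' (x,y)" using pi_comp[OF assms] by blast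
  have "aff T a b \<circ> aff T' a' b' = aff T'' (fst (T (a',b')) + a) (snd (T (a',b')) + b)"
  proof (rule ext)
    fix p :: icell
    obtain x y where p: "p = (x,y)" by fastforce
    have "T (fst (T' (x,y)) + a', snd (T' (x,y)) + b') = (fst (T (T' (x,y))) + fst (T (a',b')), snd (T (T' (x,y))) + snd (T (a',b')))"
      using pi_lin[OF assms(1), of "fst (T' (x,y))" a' "snd (T' (x,y))" b'] by simp
    then show "(aff T a b \<circ> aff T' a' b') p = aff T'' (fst (T (a',b')) + a) (snd (T (a',b')) + b) p"
      using T''(2) p by (simp add: aff_def)
  qed
  then show ?thesis using T'' by blast
qed

lemma exaffI: "T \<in> plane_isos \<Longrightarrow> \<forall>c\<in>grid m n. to_icell (g c) = aff T a b (to_icell c) \<Longrightarrow>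
   \<exists>T\<in>plane_isos. \<exists>a b. \<forall>c\<in>grid m n. to_icell (g c) = aff T a b (to_icell c)"
  by blast

lemma G_aff: assumes "g \<in> symgroup m n"
  shows "\<exists>T\<in>plane_isos. \<exists>a b. \<forall>c\<in>grid m n. to_icell (g c) = aff T a b (to_icell c)"
proof -
  have i: "(\<lambda>(x::int,y::int). (x,y)) \<in> plane_isos" "(\<lambda>(x::int,y::int). (-y,x)) \<in> plane_isos"
    "(\<lambda>(x::int,y::int). (-x,-y)) \<in> plane_isos" "(\<lambda>(x::int,y::int). (y,-x)) \<in> plane_isos"
    "(\<lambda>(x::int,y::int). (-x,y)) \<in> plane_isos" "(\<lambda>(x::int,y::int). (x,-y)) \<in> plane_isos"
    "(\<lambda>(x::int,y::int). (y,x)) \<in> plane_isos" "(\<lambda>(x::int,y::int). (-y,-x)) \<in> plane_isos"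
    unfolding plane_isos_def by auto
  have a0: "\<forall>c\<in>grid m n. to_icell (id c) = aff (\<lambda>(x::int,y::int). (x,y)) 0 0 (to_icell c)"
    by (auto simp: to_icell_def aff_def)
  have aH: "\<forall>c\<in>grid m n. to_icell (symH m n c) = aff (\<lambda>(x::int,y::int). (-x,y)) (int m - 1) 0 (to_icell c)"
    by (auto simp: D to_icell_def aff_def of_nat_diff)
  have aV: "\<forall>c\<in>grid m n. to_icell (symV m n c) = aff (\<lambda>(x::int,y::int). (x,-y)) 0 (int n - 1) (to_icell c)"
    by (auto simp: D to_icell_def aff_def of_nat_diff)
  have aR: "\<forall>c\<in>grid m n. to_icell (symR180 m n c) = aff (\<lambda>(x::int,y::int). (-x,-y)) (int m - 1) (int n - 1) (to_icell c)"
    by (auto simp: D to_icell_def aff_def of_nat_diff)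
  have aT: "\<forall>c\<in>grid m n. to_icell (symT m n c) = aff (\<lambda>(x::int,y::int). (y,x)) 0 0 (to_icell c)"
    by (auto simp: D to_icell_def aff_def of_nat_diff)
  have aAT: "\<forall>c\<in>grid m n. to_icell (symAT m n c) = aff (\<lambda>(x::int,y::int). (-y,-x)) (int n - 1) (int m - 1) (to_icell c)"
    by (auto simp: D to_icell_def aff_def of_nat_diff)
  have a90: "\<forall>c\<in>grid m n. to_icell (symR90 m n c) = aff (\<lambda>(x::int,y::int). (y,-x)) 0 (int m - 1) (to_icell c)"
    by (auto simp: D to_icell_def aff_def of_nat_diff)
  have a270: "\<forall>c\<in>grid m n. to_icell (symR270 m n c) = aff (\<lambda>(x::int,y::int). (-y,x)) (int n - 1) 0 (to_icell c)"
    by (auto simp: D to_icell_def aff_def of_nat_diff)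
  note e = exaffI[OF i(1) a0] exaffI[OF i(5) aH] exaffI[OF i(6) aV]
       exaffI[OF i(3) aR] exaffI[OF i(7) aT] exaffI[OF i(8) aAT] exaffI[OF i(4) a90] exaffI[OF i(2) a270]
  show ?thesis using assms e unfolding symgroup_def by (auto split: if_splits) blast+
qed


lemma G_inj: "g \<in> symgroup m n \<Longrightarrow> inj g"
  using G_inv by (metis inj_on_id inj_on_imageI2 image_comp image_id)

lemma G_img_grid: assumes "g \<in> symgroup m n" shows "g ` grid m n = grid m n"
proof
  show "g ` grid m n \<subseteq> grid m n" using G_grid[OF assms] by blast
  obtain h where h: "h \<in> symgroup m n" "g \<circ> h = id" using G_inv[OF assms] by blast
  show "grid m n \<subseteq> g ` grid m n"
  proof
    fix c assume c: "c \<in> grid m n"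
    have "c = g (h c)" using h(2) by (metis comp_apply id_apply)
    then show "c \<in> g ` grid m n" using G_grid[OF h(1) c] by blast
  qed
qed

lemma placement_aff: assumes T: "T \<in> plane_isos" and p: "placement_of P Q"
  shows "placement_of P (aff T a b ` Q)"
proof -
  obtain T' a' b' where T': "T' \<in> plane_isos" and Q: "Q = (\<lambda>p. (fst (T' p) + a', snd (T' p) + b')) ` P"
    using p unfolding placement_of_def by blast
  have "Q = aff T' a' b' ` P" using Q by (simp add: aff_def[abs_def])
  then have "aff T a b ` Q = (aff T a b \<circ> aff T' a' b') ` P" by (simp add: image_comp)
  moreover obtain T'' a'' b'' where "T'' \<in> plane_isos" "aff T a b \<circ> aff T' a' b' = aff T'' a'' b''"
    using aff_comp[OF T T'] by blast
  ultimately show ?thesis unfolding placement_of_def aff_def[abs_def] by auto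
qed

lemma solv_map: assumes g: "g \<in> symgroup m n" and B: "B \<subseteq> grid m n" and s: "solvable m n ps B"
  shows "solvable m n ps (g ` B)"
proof -
  obtain T a b where T: "T \<in> plane_isos" and ga: "\<forall>c\<in>grid m n. to_icell (g c) = aff T a b (to_icell c)"
    using G_aff[OF g] by blast
  define A where "A = aff T a b"
  have injA: "inj A" unfolding A_def using aff_inj[OF T] .
  obtain Qs where Qs: "length Qs = length ps" "\<forall>k < length ps. placement_of (ps ! k) (Qs ! k)"
      "\<forall>k < length ps. \<forall>k' < length ps. k \<noteq> k' \<longrightarrow> Qs ! k \<inter> Qs ! k' = {}"
      "\<Union> (set Qs) = to_icell ` (grid m n - B)"
    using s unfolding solvable_def by blast
  define Qs' where "Qs' = map ((`) A) Qs"
  have 1: "length Qs' = length ps" using Qs(1) by (simp add: Qs'_def)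
  have 2: "\<forall>k < length ps. placement_of (ps ! k) (Qs' ! k)"
    using Qs(1,2) placement_aff[OF T] by (simp add: Qs'_def A_def)
  have 3: "\<forall>k < length ps. \<forall>k' < length ps. k \<noteq> k' \<longrightarrow> Qs' ! k \<inter> Qs' ! k' = {}"
    using Qs(1,3) injA by (simp add: Qs'_def image_Int[symmetric])
  have "\<Union> (set Qs') = A ` \<Union> (set Qs)" by (simp add: Qs'_def image_Union)
  also have "\<dots> = A ` to_icell ` (grid m n - B)" using Qs(4) by simp
  also have "\<dots> = to_icell ` g ` (grid m n - B)"
    unfolding image_image using ga by (auto simp: A_def)
  also have "g ` (grid m n - B) = grid m n - g ` B"
    using G_inj[OF g] G_img_grid[OF g] B by (simp add: image_set_diff)
  finally have 4: "\<Union> (set Qs') = to_icell ` (grid m n - g ` B)" .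
  show ?thesis unfolding solvable_def using 1 2 3 4 by blast
qed


lemma act_comp: "act (a \<circ> b) B = act a (act b B)"
  by (simp add: act_def image_comp)

lemma act_img_comp: "act (a \<circ> b) ` P = act a ` (act b ` P)"
  by (simp add: act_comp image_image)

lemma act_id: "act id B = B" by (simp add: act_def)

lemma act_inj: "g \<in> symgroup m n \<Longrightarrow> inj_on (act g) A"
proof -
  assume "g \<in> symgroup m n"
  then have "inj g" by (rule G_inj)
  then have "\<And>x y. g ` x = g ` y \<Longrightarrow> x = y" using inj_image_eq_iff by blast
  then show ?thesis unfolding inj_on_def act_def by blast
qed

lemma fin_grid: "finite (grid m n)"
proof -
  have "grid m n \<subseteq> {..<m} \<times> {..<n}" by (auto simp: grid_def)
  then show ?thesis by (rule finite_subset) auto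
qed

lemma fin_boards: "finite (boards m n r)"
proof -
  have "boards m n r \<subseteq> Pow (grid m n)" by (auto simp: boards_def)
  moreover have "finite (Pow (grid m n))" using fin_grid by simp
  ultimately show ?thesis by (rule finite_subset)
qed

lemma G_boards: assumes g: "g \<in> symgroup m n" and B: "B \<in> boards m n r"
  shows "act g B \<in> boards m n r"
proof -
  have "B \<subseteq> grid m n" "card B = r" using B by (auto simp: boards_def)
  moreover have "g ` B \<subseteq> grid m n" using G_grid[OF g] \<open>B \<subseteq> grid m n\<close> by blast
  moreover have "card (g ` B) = card B" using G_inj[OF g] by (simp add: card_image inj_on_subset)
  ultimately show ?thesis by (simp add: boards_def act_def)
qed

lemma G_solv: assumes g: "g \<in> symgroup m n" and B: "B \<subseteq> grid m n"
  shows "solvable m n ps (act g B) \<longleftrightarrow> solvable m n ps B"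
proof
  assume "solvable m n ps B" then show "solvable m n ps (act g B)"
    using solv_map[OF g B] by (simp add: act_def)
next
  assume s: "solvable m n ps (act g B)"
  obtain h where h: "h \<in> symgroup m n" "h \<circ> g = id" using G_inv[OF g] by blast
  have "g ` B \<subseteq> grid m n" using G_grid[OF g] B by blast
  then have "solvable m n ps (h ` (g ` B))" using solv_map[OF h(1)] s by (simp add: act_def)
  moreover have "h ` (g ` B) = B" using h(2) by (simp add: image_comp)
  ultimately show "solvable m n ps B" by simp
qed

lemma bp_map: assumes rr: "regions_respected m n reg" and g: "g \<in> symgroup m n"
  shows "\<exists>L. \<forall>B. B \<subseteq> grid m n \<longrightarrow> board_partition reg (act g B) = board_partition reg B \<circ> L"
proof -
  obtain h where h: "h \<in> symgroup m n" "h \<circ> g = id" "g \<circ> h = id" using G_inv[OF g] by blast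
  define L where "L = (\<lambda>l. SOME l''. h ` region m n reg l = region m n reg l'')"
  have L: "h ` region m n reg l = region m n reg (L l)" for l
    unfolding L_def by (rule someI_ex) (use rr h(1) in \<open>auto simp: regions_respected_def\<close>)
  have hg: "h (g c) = c" for c using h(2) by (metis comp_apply id_apply)
  have gh: "g (h c) = c" for c using h(3) by (metis comp_apply id_apply)
  have "board_partition reg (act g B) l = (board_partition reg B \<circ> L) l" if B: "B \<subseteq> grid m n" for B l
  proof -
    have "{c \<in> act g B. reg c = l} = g ` {c \<in> B. reg (g c) = l}" by (auto simp: act_def)
    then have "card {c \<in> act g B. reg c = l} = card {c \<in> B. reg (g c) = l}"
      using G_inj[OF g] by (simp add: card_image inj_on_subset)
    also have "{c \<in> B. reg (g c) = l} = {c \<in> B. reg c = L l}"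
    proof -
      have "reg (g c) = l \<longleftrightarrow> reg c = L l" if c: "c \<in> B" for c
      proof -
        have cg: "c \<in> grid m n" using c B by blast
        have gcg: "g c \<in> grid m n" using G_grid[OF g cg] .
        have "reg (g c) = l \<longleftrightarrow> g c \<in> region m n reg l" using gcg by (simp add: region_def)
        also have "\<dots> \<longleftrightarrow> c \<in> h ` region m n reg l"
          by (metis hg gh imageE imageI)
        also have "\<dots> \<longleftrightarrow> c \<in> region m n reg (L l)" by (simp only: L)
        also have "\<dots> \<longleftrightarrow> reg c = L l" using cg by (simp add: region_def)
        finally show ?thesis .
      qed
      then show ?thesis by blast
    qed
    finally show ?thesis by (simp add: board_partition_def)
  qed
  then show ?thesis by blast
qed


theorem corollary3p2:
  fixes m n r t :: nat
    and reg :: "cell \<Rightarrow> 'l"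
    and Bbar :: "board set"
    and \<pi> :: "nat \<Rightarrow> board set"
    and p :: "nat \<Rightarrow> 'l \<Rightarrow> nat"
    and ps :: "icell set list"
  assumes "m \<ge> 1" and "n \<ge> 1" and "1 \<le> r" and "r \<le> m * n"
    and "regions_respected m n reg"
    and "Bbar \<subseteq> boards m n r"
    and "\<forall>i \<in> {1..t}. \<pi> i = {B \<in> boards m n r. board_partition reg B = p i}"
    and "\<forall>i \<in> {1..t}. \<forall>j \<in> {1..t}. i \<noteq> j \<longrightarrow> \<pi> i \<inter> \<pi> j = {}"
    and "Bbar = (\<Union>i \<in> {1..t}. \<pi> i)"
    and "\<forall>B \<in> boards m n r. \<exists>B' \<in> Bbar. equivalent m n B B'"
    and "\<forall>B \<in> Bbar. \<forall>B' \<in> Bbar. equivalent m n B B' \<longrightarrow>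
           board_partition reg B = board_partition reg B'"
    and "tiling_problem m n r ps"
  shows "card {B \<in> boards m n r. solvable m n ps B} =
         (\<Sum>i = 1..t. card {B \<in> \<pi> i. solvable m n ps B} *
            (card (symgroup m n) div card {g \<in> symgroup m n. act g ` \<pi> i = \<pi> i}))"
proof -
  note rr = assms(5) and pidef = assms(7) and disj = assms(8) and Bbar = assms(9)
    and cover = assms(10) and same = assms(11)
  define G where "G = symgroup m n"
  define Bd where "Bd = boards m n r"
  define S where "S = {B \<in> Bd. solvable m n ps B}"
  define Si where "Si i = {B \<in> \<pi> i. solvable m n ps B}" for i
  define Orb where "Orb i = (\<lambda>g. act g ` \<pi> i) ` G" for i
  define K where "K i = {g \<in> G. act g ` \<pi> i = \<pi> i}" for i
  have finG: "finite G" unfolding G_def by (rule G_finite)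
  have finBd: "finite Bd" unfolding Bd_def by (rule fin_boards)
  have pisub: "\<pi> i \<subseteq> Bd" if "i \<in> {1..t}" for i using pidef that by (auto simp: Bd_def)
  have Bdgrid: "B \<subseteq> grid m n" if "B \<in> Bd" for B using that by (auto simp: Bd_def boards_def)
  have inv: "\<exists>h\<in>G. h \<circ> g = id \<and> g \<circ> h = id" if "g \<in> G" for g using G_inv that by (simp add: G_def)
  have clos: "g \<circ> h \<in> G" if "g \<in> G" "h \<in> G" for g h using G_closed that by (simp add: G_def)
  have GB: "act g B \<in> Bd" if "g \<in> G" "B \<in> Bd" for g B using G_boards that by (simp add: G_def Bd_def)

  have key1: "act k ` \<pi> i = \<pi> i" if i: "i \<in> {1..t}" and k: "k \<in> G" and B: "B \<in> \<pi> i" and kB: "act k B \<in> \<pi> i" for i k B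
  proof -
    obtain L where L: "\<And>B. B \<subseteq> grid m n \<Longrightarrow> board_partition reg (act k B) = board_partition reg B \<circ> L"
      using bp_map[OF rr, of k] k by (auto simp: G_def)
    have pB: "board_partition reg B' = p i" if "B' \<in> \<pi> i" for B' using pidef i that by auto
    have pL: "p i \<circ> L = p i" using L[OF Bdgrid] pisub[OF i] B kB pB by (metis subsetD)
    have sub: "act k ` \<pi> i \<subseteq> \<pi> i"
    proof
      fix X assume "X \<in> act k ` \<pi> i"
      then obtain B' where B': "B' \<in> \<pi> i" "X = act k B'" by blast
      have "B' \<in> Bd" using B' pisub[OF i] by blast
      then have "board_partition reg X = p i" using L[OF Bdgrid] B' pB pL by metis
      moreover have "X \<in> Bd" using GB[OF k] \<open>B' \<in> Bd\<close> B' by simp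
      ultimately show "X \<in> \<pi> i" using pidef i by (auto simp: Bd_def)
    qed
    have "card (act k ` \<pi> i) = card (\<pi> i)" using act_inj k by (simp add: G_def card_image)
    moreover have "finite (\<pi> i)" using finBd pisub[OF i] finite_subset by blast
    ultimately show ?thesis using sub card_subset_eq by blast
  qed

  have key2: "i = j \<and> act h ` \<pi> i = act h' ` \<pi> j"
    if i: "i \<in> {1..t}" and j: "j \<in> {1..t}" and h: "h \<in> G" and h': "h' \<in> G"
      and B: "B \<in> \<pi> i" and B': "B' \<in> \<pi> j" and eq: "act h B = act h' B'" for i j h h' B B'
  proof -
    obtain h'' where h'': "h'' \<in> G" "h'' \<circ> h' = id" "h' \<circ> h'' = id" using inv[OF h'] by blast
    define k where "k = h'' \<circ> h"
    have k: "k \<in> G" unfolding k_def using clos h'' h by blast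
    have kB: "act k B = B'" unfolding k_def act_comp eq act_comp[symmetric] h''(2) act_id ..
    have "equivalent m n B B'" unfolding equivalent_def using k kB by (auto simp: G_def)
    moreover have "B \<in> Bbar" "B' \<in> Bbar" using Bbar B B' i j by auto
    ultimately have "board_partition reg B = board_partition reg B'" using same by blast
    moreover have "board_partition reg B = p i" "board_partition reg B' = p j" using pidef i j B B' by auto
    ultimately have "p i = p j" by simp
    then have "\<pi> i = \<pi> j" using pidef i j by simp
    then have ij: "i = j" using disj i j B by blast
    have "act k ` \<pi> i = \<pi> i" using key1[OF i k B] kB B' ij by simp
    then have "act h' ` \<pi> i = act (h' \<circ> k) ` \<pi> i" by (simp add: act_img_comp)
    also have "h' \<circ> k = h" unfolding k_def by (simp add: comp_assoc[symmetric] h''(3))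
    finally show ?thesis using ij by simp
  qed

  have orbit: "card G = card (Orb i) * card (K i)" if i: "i \<in> {1..t}" for i
  proof -
    define f where "f g = act g ` \<pi> i" for g
    have fcomp: "f (a \<circ> b) = act a ` f b" for a b unfolding f_def by (simp add: act_img_comp)
    have Gun: "G = (\<Union>X\<in>Orb i. {g \<in> G. f g = X})" unfolding Orb_def f_def by auto
    have fib: "card {g \<in> G. f g = X} = card (K i)" if X: "X \<in> Orb i" for X
    proof -
      obtain h where h: "h \<in> G" "X = f h" using X unfolding Orb_def f_def by blast
      obtain h'' where h'': "h'' \<in> G" "h'' \<circ> h = id" "h \<circ> h'' = id" using inv[OF h(1)] by blast
      have "{g \<in> G. f g = X} = (\<lambda>k. h \<circ> k) ` K i"
      proof
        show "{g \<in> G. f g = X} \<subseteq> (\<lambda>k. h \<circ> k) ` K i"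
        proof
          fix g assume g: "g \<in> {g \<in> G. f g = X}"
          define k where "k = h'' \<circ> g"
          have "k \<in> G" unfolding k_def using clos h''(1) g by blast
          moreover have "f k = \<pi> i"
          proof -
            have "f k = act h'' ` f g" unfolding k_def fcomp ..
            also have "\<dots> = act h'' ` f h" using g h(2) by simp
            also have "\<dots> = f (h'' \<circ> h)" unfolding fcomp ..
            also have "\<dots> = \<pi> i" unfolding h''(2) f_def by (simp add: act_id)
            finally show ?thesis .
          qed
          moreover have "h \<circ> k = g" unfolding k_def by (simp add: comp_assoc[symmetric] h''(3))
          ultimately show "g \<in> (\<lambda>k. h \<circ> k) ` K i" unfolding K_def f_def by force
        qed
        show "(\<lambda>k. h \<circ> k) ` K i \<subseteq> {g \<in> G. f g = X}"
        proof
          fix g assume "g \<in> (\<lambda>k. h \<circ> k) ` K i"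
          then obtain k where k: "k \<in> K i" "g = h \<circ> k" by blast
          have "g \<in> G" using clos h(1) k unfolding K_def by blast
          moreover have "f g = X" using k h unfolding K_def by (simp add: fcomp) (simp add: f_def)
          ultimately show "g \<in> {g \<in> G. f g = X}" by blast
        qed
      qed
      moreover have "inj_on (\<lambda>k. h \<circ> k) (K i)"
      proof
        fix a b assume "h \<circ> a = h \<circ> b"
        then have "h'' \<circ> (h \<circ> a) = h'' \<circ> (h \<circ> b)" by simp
        then show "a = b" by (simp add: comp_assoc[symmetric] h''(2))
      qed
      ultimately show ?thesis by (simp add: card_image)
    qed
    have "card G = (\<Sum>X\<in>Orb i. card {g \<in> G. f g = X})"
    proof (subst Gun, rule card_UN_disjoint)
      show "finite (Orb i)" using finG unfolding Orb_def by simp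
      show "\<forall>X\<in>Orb i. finite {g \<in> G. f g = X}" using finG by simp
      show "\<forall>X\<in>Orb i. \<forall>Y\<in>Orb i. X \<noteq> Y \<longrightarrow> {g \<in> G. f g = X} \<inter> {g \<in> G. f g = Y} = {}" by blast
    qed
    also have "\<dots> = (\<Sum>X\<in>Orb i. card (K i))" using fib by simp
    finally show ?thesis by simp
  qed

  have Kpos: "card (K i) > 0" for i
  proof -
    have "id \<in> K i" unfolding K_def G_def using G_id by (simp add: act_def)
    moreover have "finite (K i)" using finG unfolding K_def by simp
    ultimately show ?thesis by (simp add: card_gt_0_iff) blast
  qed

  define U where "U i = (\<Union>X\<in>Orb i. S \<inter> X)" for i

  have cSX: "card (S \<inter> X) = card (Si i)" if i: "i \<in> {1..t}" and X: "X \<in> Orb i" for i X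
  proof -
    obtain h where h: "h \<in> G" "X = act h ` \<pi> i" using X unfolding Orb_def by blast
    have "S \<inter> X = act h ` Si i"
      unfolding S_def Si_def h(2) using pisub[OF i] GB[OF h(1)] G_solv[of h m n _ ps] h(1) Bdgrid
      by (auto simp: G_def)
    then show ?thesis using act_inj h(1) by (simp add: G_def card_image)
  qed

  have cU: "card (U i) = card (Si i) * (card G div card (K i))" if i: "i \<in> {1..t}" for i
  proof -
    have "card (U i) = (\<Sum>X\<in>Orb i. card (S \<inter> X))"
      unfolding U_def
    proof (rule card_UN_disjoint)
      show "finite (Orb i)" using finG unfolding Orb_def by simp
      show "\<forall>X\<in>Orb i. finite (S \<inter> X)" using finBd unfolding S_def by auto
      show "\<forall>X\<in>Orb i. \<forall>Y\<in>Orb i. X \<noteq> Y \<longrightarrow> S \<inter> X \<inter> (S \<inter> Y) = {}"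
      proof (intro ballI impI)
        fix X Y assume X: "X \<in> Orb i" and Y: "Y \<in> Orb i" and XY: "X \<noteq> Y"
        obtain h where h: "h \<in> G" "X = act h ` \<pi> i" using X unfolding Orb_def by blast
        obtain h' where h': "h' \<in> G" "Y = act h' ` \<pi> i" using Y unfolding Orb_def by blast
        show "S \<inter> X \<inter> (S \<inter> Y) = {}"
        proof (rule ccontr)
          assume "S \<inter> X \<inter> (S \<inter> Y) \<noteq> {}"
          then obtain B B' where "B \<in> \<pi> i" "B' \<in> \<pi> i" "act h B = act h' B'" using h h' by blast
          then have "X = Y" using key2[OF i i h(1) h'(1)] h h' by blast
          then show False using XY by simp
        qed
      qed
    qed
    also have "\<dots> = card (Orb i) * card (Si i)" using cSX[OF i] by simp
    also have "card (Orb i) = card G div card (K i)" using orbit[OF i] Kpos[of i] by simp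
    finally show ?thesis by simp
  qed

  have Sun: "S = (\<Union>i\<in>{1..t}. U i)"
  proof
    show "(\<Union>i\<in>{1..t}. U i) \<subseteq> S" unfolding U_def by blast
    show "S \<subseteq> (\<Union>i\<in>{1..t}. U i)"
    proof
      fix B assume B: "B \<in> S"
      then have "B \<in> Bd" unfolding S_def by simp
      then obtain B' where B': "B' \<in> Bbar" "equivalent m n B B'" using cover by (auto simp: Bd_def)
      then obtain k where k: "k \<in> G" "act k B = B'" unfolding equivalent_def G_def by blast
      obtain i where i: "i \<in> {1..t}" "B' \<in> \<pi> i" using B'(1) Bbar by blast
      obtain k'' where k'': "k'' \<in> G" "k'' \<circ> k = id" using inv[OF k(1)] by blast
      have "act k'' B' = B" using k(2) k''(2) by (metis act_comp act_id)
      then have "B \<in> act k'' ` \<pi> i" using i(2) by blast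
      moreover have "act k'' ` \<pi> i \<in> Orb i" unfolding Orb_def using k''(1) by blast
      ultimately show "B \<in> (\<Union>i\<in>{1..t}. U i)" using B i(1) unfolding U_def by blast
    qed
  qed

  have "card S = (\<Sum>i\<in>{1..t}. card (U i))"
    unfolding Sun
  proof (rule card_UN_disjoint)
    show "finite {1..t}" by simp
    show "\<forall>i\<in>{1..t}. finite (U i)" using finBd unfolding U_def S_def by auto
    show "\<forall>i\<in>{1..t}. \<forall>j\<in>{1..t}. i \<noteq> j \<longrightarrow> U i \<inter> U j = {}"
    proof (intro ballI impI)
      fix i j assume i: "i \<in> {1..t}" and j: "j \<in> {1..t}" and ij: "i \<noteq> j"
      show "U i \<inter> U j = {}"
      proof (rule ccontr)
        assume "U i \<inter> U j \<noteq> {}"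
        then obtain X Y C where "X \<in> Orb i" "Y \<in> Orb j" "C \<in> X" "C \<in> Y" unfolding U_def by blast
        then obtain h h' B B' where "h \<in> G" "h' \<in> G" "B \<in> \<pi> i" "B' \<in> \<pi> j" "act h B = act h' B'"
          unfolding Orb_def by blast
        then show False using key2[OF i j] ij by blast
      qed
    qed
  qed
  also have "\<dots> = (\<Sum>i\<in>{1..t}. card (Si i) * (card G div card (K i)))" using cU by simp
  finally show ?thesis unfolding S_def Si_def K_def G_def Bd_def by simp
qed

end
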